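(* Let $A$ be a real symmetric $n\times n$ matrix such that the graph $\mathcal{G}(A)$ is connected and all nonzero off-diagonal entries of $A$ have the same sign. Let $V=\{1,\dots,n\}$ be the vertex set of $\mathcal{G}(A)$ and let $S\subseteq V$ be a zero forcing set of $\mathcal{G}(A)$. Then the real Lie algebra generated by $A$ and $\{{\bf e}_j{\bf e}_j^T: j\in S\}$ equals $gl(n,\mathbb{R})$.
   Context: ${\bf e}_j$ is the $j$th standard basis vector of $\mathbb{R}^n$. For a real symmetric $A=[a_{kj}]$, $\mathcal{G}(A)$ is the simple graph on $\{1,\dots,n\}$ with edges $\{kj: a_{kj}\neq0,\ k\neq j\}$. Zero forcing: color each vertex of a graph black or white; a black vertex $v$ forces (infects) a white vertex $w$ if $w$ is the unique white neighbor of $v$, in which case $w$ is recolored black. A set $S$ of vertices is a zero forcing set if, starting with exactly the vertices in $S$ black and repeatedly applying forces, all vertices eventually become black. The real Lie algebra generated by a set of matrices is the smallest real vector space containing them closed under $[X,Y]=XY-YX$; $gl(n,\mathbb{R})$ is the Lie algebra of all real $n\times n$ matrices. *)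

theory Defs
  imports "HOL-Analysis.Analysis"
begin

text \<open>Matrices are n x n real matrices indexed by a finite type 'n (the vertex set V).\<close>

definition graph_edge :: "real^'n^'n \<Rightarrow> 'n \<Rightarrow> 'n \<Rightarrow> bool" where
  "graph_edge A k j \<longleftrightarrow> k \<noteq> j \<and> A $ k $ j \<noteq> 0"

definition graph_connected :: "real^'n^'n \<Rightarrow> bool" where
  "graph_connected A \<longleftrightarrow> (\<forall>i j. (i, j) \<in> {(k, l). graph_edge A k l}\<^sup>*)"

inductive_set zf_closure :: "('a \<Rightarrow> 'a \<Rightarrow> bool) \<Rightarrow> 'a set \<Rightarrow> 'a set"
  for E :: "'a \<Rightarrow> 'a \<Rightarrow> bool" and S :: "'a set" where
  init: "v \<in> S \<Longrightarrow> v \<in> zf_closure E S"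
| force: "\<lbrakk>v \<in> zf_closure E S; E v w;
           \<And>u. E v u \<Longrightarrow> u \<noteq> w \<Longrightarrow> u \<in> zf_closure E S\<rbrakk>
          \<Longrightarrow> w \<in> zf_closure E S"

definition zero_forcing_set :: "('a \<Rightarrow> 'a \<Rightarrow> bool) \<Rightarrow> 'a set \<Rightarrow> bool" where
  "zero_forcing_set E S \<longleftrightarrow> zf_closure E S = UNIV"

definition lie_bracket :: "real^'n^'n \<Rightarrow> real^'n^'n \<Rightarrow> real^'n^'n" where
  "lie_bracket X Y = X ** Y - Y ** X"

definition lie_generated :: "(real^'n^'n) set \<Rightarrow> (real^'n^'n) set" where
  "lie_generated G = \<Inter>{L. subspace L \<and> G \<subseteq> L \<and>
      (\<forall>X\<in>L. \<forall>Y\<in>L. lie_bracket X Y \<in> L)}"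

definition diag_unit :: "'n \<Rightarrow> real^'n^'n" where
  "diag_unit j = (\<chi> k l. if k = j \<and> l = j then 1 else 0)"

end

theory Submission
  imports Defs
begin

definition E :: "'n \<Rightarrow> 'n \<Rightarrow> real^'n^'n" where
  "E i j = (\<chi> k l. if k = i \<and> l = j then 1 else 0)"

lemma ifm1: "(if P then 1 else 0) * (x::real) = (if P then x else 0)" by simp
lemma ifm2: "(x::real) * (if P then 1 else 0) = (if P then x else 0)" by simp

lemma E_left: "(E i j ** M) $ a $ b = (if a = i then M $ j $ b else 0)"
proof -
  have "(E i j ** M) $ a $ b = (\<Sum>k\<in>UNIV. if k = j then (if a = i then M $ k $ b else 0) else 0)"
    unfolding matrix_matrix_mult_def E_def by (auto simp: ifm1 ifm2 intro!: sum.cong)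
  then show ?thesis by (simp add: sum.delta)
qed

lemma E_right: "(M ** E i j) $ a $ b = (if b = j then M $ a $ i else 0)"
proof -
  have "(M ** E i j) $ a $ b = (\<Sum>k\<in>UNIV. if k = i then (if b = j then M $ a $ k else 0) else 0)"
    unfolding matrix_matrix_mult_def E_def by (auto simp: ifm1 ifm2 intro!: sum.cong)
  then show ?thesis by (simp add: sum.delta)
qed

lemma E_entry: "E i j $ a $ b = (if a = i \<and> b = j then 1 else 0)"
  by (simp add: E_def)

lemma E_mult: "E i j ** E k l = (if j = k then E i l else 0)"
  by (auto simp: vec_eq_iff E_left E_entry)

lemma ad_entry: "lie_bracket (E k k) M $ i $ j =
   (if i = k then M $ k $ j else 0) - (if j = k then M $ i $ k else 0)"
  by (simp add: lie_bracket_def E_left E_right)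

lemma ad2_sym:
  assumes "transpose A = A" "u \<noteq> v"
  shows "lie_bracket (E u u) (lie_bracket (E u u) (lie_bracket (E v v) A)) = A$v$u *\<^sub>R (E v u - E u v)"
proof -
  have s: "A$u$v = A$v$u" using assms(1) by (metis transpose_def vec_lambda_beta)
  show ?thesis using assms(2) s by (auto simp: vec_eq_iff ad_entry E_entry)
qed

lemma E_sum: "(\<Sum>u\<in>UNIV-{v}. A$v$u *\<^sub>R (E v u - E u v)) = lie_bracket (E v v) (A::real^'n^'n)"
  if "transpose A = A"
proof -
  have s: "\<And>i. A$i$v = A$v$i" using that by (metis transpose_def vec_lambda_beta)
  have "(\<Sum>u\<in>UNIV-{v}. A$v$u *\<^sub>R (E v u - E u v)) $ i $ j = lie_bracket (E v v) A $ i $ j" for i j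
  proof -
    have "(\<Sum>u\<in>UNIV-{v}. A$v$u *\<^sub>R (E v u - E u v)) $ i $ j =
      (\<Sum>u\<in>UNIV-{v}. (if u = j then (if i = v then A$v$u else 0) else 0) - (if u = i then (if j = v then A$v$u else 0) else 0))"
      unfolding sum_component apply (rule sum.cong[OF refl])
      apply (simp only: vector_scaleR_component vector_minus_component E_entry)
      by (cases "u = j"; cases "u = i"; cases "i = v"; cases "j = v"; simp)
    also have "\<dots> = (if i = v \<and> j \<noteq> v then A$v$j else 0) - (if j = v \<and> i \<noteq> v then A$v$i else 0)"
      by (simp add: sum_subtractf sum.delta)
    also have "\<dots> = lie_bracket (E v v) A $ i $ j"
      using s[of i] by (auto simp: ad_entry)
    finally show ?thesis .
  qed
  then show ?thesis by (simp add: vec_eq_iff)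
qed

lemma mdiff_l: "(A::real^'n^'n) ** (B - C) = A ** B - A ** C"
  by (vector matrix_matrix_mult_def sum_subtractf right_diff_distrib)
lemma mdiff_r: "((B::real^'n^'n) - C) ** A = B ** A - C ** A"
  by (vector matrix_matrix_mult_def sum_subtractf left_diff_distrib)
lemma madd_r: "((B::real^'n^'n) + C) ** A = B ** A + C ** A"
  by (vector matrix_matrix_mult_def sum.distrib distrib_right)

definition lie_closed :: "(real^'n^'n) set \<Rightarrow> bool" where
  "lie_closed L \<longleftrightarrow> subspace L \<and> (\<forall>X\<in>L. \<forall>Y\<in>L. lie_bracket X Y \<in> L)"

lemma lie_generated_closed: "lie_closed (lie_generated G)"
  unfolding lie_closed_def lie_generated_def
  by (auto intro!: subspace_Inter)

lemma lie_generated_sub: "G \<subseteq> lie_generated G"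
  unfolding lie_generated_def by auto

lemma lcD: assumes "lie_closed L"
  shows "subspace L" "X \<in> L \<Longrightarrow> Y \<in> L \<Longrightarrow> lie_bracket X Y \<in> L"
  using assms by (auto simp: lie_closed_def)

lemma force_step:
  assumes L: "lie_closed L" and sym: "transpose A = A" and AL: "A \<in> L" and vL: "E v v \<in> L"
    and vw: "v \<noteq> w" "A$v$w \<noteq> 0"
    and nb: "\<And>u. u \<noteq> v \<Longrightarrow> u \<noteq> w \<Longrightarrow> A$v$u \<noteq> 0 \<Longrightarrow> E u u \<in> L"
  shows "E v w - E w v \<in> L"
proof -
  note sL = lcD(1)[OF L]
  have XL: "lie_bracket (E v v) A \<in> L" using lcD(2)[OF L vL AL] .
  have T: "A$v$u *\<^sub>R (E v u - E u v) \<in> L" if "u \<in> UNIV-{v}-{w}" for u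
  proof (cases "A$v$u = 0")
    case True then show ?thesis using subspace_0[OF sL] by simp
  next
    case False
    then have "E u u \<in> L" using nb that by auto
    then have "lie_bracket (E u u) (lie_bracket (E u u) (lie_bracket (E v v) A)) \<in> L"
      using lcD(2)[OF L] XL by blast
    then show ?thesis using ad2_sym[OF sym, of u v] that by auto
  qed
  have "lie_bracket (E v v) A = A$v$w *\<^sub>R (E v w - E w v) + (\<Sum>u\<in>UNIV-{v}-{w}. A$v$u *\<^sub>R (E v u - E u v))"
    using E_sum[OF sym, of v] sum.remove[of "UNIV-{v}" w "\<lambda>u. A$v$u *\<^sub>R (E v u - E u v)"] vw(1)
    by simp
  then have "A$v$w *\<^sub>R (E v w - E w v) = lie_bracket (E v v) A - (\<Sum>u\<in>UNIV-{v}-{w}. A$v$u *\<^sub>R (E v u - E u v))"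
    by (simp add: algebra_simps)
  also have "\<dots> \<in> L" using subspace_diff[OF sL XL subspace_sum[OF sL T]] .
  finally have "(1 / A$v$w) *\<^sub>R (A$v$w *\<^sub>R (E v w - E w v)) \<in> L" using subspace_scale[OF sL] by blast
  then show ?thesis using vw(2) by simp
qed

lemma ww_step:
  assumes L: "lie_closed L" and vL: "E v v \<in> L" and DL: "E v w - E w v \<in> L" and vw: "v \<noteq> w"
  shows "E v w \<in> L" "E w v \<in> L" "E w w \<in> L"
proof -
  note sL = lcD(1)[OF L]
  have B: "lie_bracket (E v v) (E v w - E w v) = E v w + E w v"
    using vw by (auto simp: vec_eq_iff ad_entry E_entry)
  have BL: "E v w + E w v \<in> L" using lcD(2)[OF L vL DL] B by simp
  have C: "lie_bracket (E v w - E w v) (E v w + E w v) = 2 *\<^sub>R (E v v - E w w)"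
    using vw by (simp add: lie_bracket_def mdiff_l mdiff_r madd_r matrix_add_ldistrib E_mult algebra_simps scaleR_2)
  have CL: "2 *\<^sub>R (E v v - E w w) \<in> L" using lcD(2)[OF L DL BL] C by simp
  have "E v v - (1/2) *\<^sub>R (2 *\<^sub>R (E v v - E w w)) \<in> L"
    using subspace_diff[OF sL vL subspace_scale[OF sL CL]] .
  then show "E w w \<in> L" by simp
  have "(1/2) *\<^sub>R ((E v w + E w v) + (E v w - E w v)) \<in> L"
    using subspace_scale[OF sL subspace_add[OF sL BL DL]] .
  then show "E v w \<in> L" by (simp add: scaleR_2[symmetric] algebra_simps)
  have "(1/2) *\<^sub>R ((E v w + E w v) - (E v w - E w v)) \<in> L"
    using subspace_scale[OF sL subspace_diff[OF sL BL DL]] .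
  then show "E w v \<in> L" by (simp add: scaleR_2[symmetric] algebra_simps)
qed

lemma diag_unit_E: "diag_unit j = E j j"
  by (simp add: diag_unit_def E_def)

lemma E_row: "(\<Sum>j\<in>UNIV. c j *\<^sub>R E i j) $ a $ b = (if a = i then c b else (0::real))"
proof -
  have "(\<Sum>j\<in>UNIV. c j *\<^sub>R E i j) $ a $ b = (\<Sum>j\<in>UNIV. if j = b then (if a = i then c j else 0) else 0)"
    unfolding sum_component by (rule sum.cong[OF refl]) (simp add: E_entry)
  then show ?thesis by (simp add: sum.delta)
qed

lemma E_decomp: "M = (\<Sum>i\<in>UNIV. \<Sum>j\<in>UNIV. M$i$j *\<^sub>R E i j)"
proof -
  have "(\<Sum>i\<in>UNIV. \<Sum>j\<in>UNIV. M$i$j *\<^sub>R E i j) $ a $ b = M $ a $ b" for a b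
  proof -
    have "(\<Sum>i\<in>UNIV. \<Sum>j\<in>UNIV. M$i$j *\<^sub>R E i j) $ a $ b
        = (\<Sum>i\<in>UNIV. if i = a then M$i$b else 0)"
      unfolding sum_component[of _ _ a] sum_component[of _ _ b]
      by (rule sum.cong[OF refl]) (simp only: E_row[unfolded sum_component], auto)
    then show ?thesis by (simp add: sum.delta)
  qed
  then show ?thesis by (simp add: vec_eq_iff)
qed

theorem theorem4p1:
  fixes A :: "real^'n^'n" and S :: "'n set"
  assumes "transpose A = A"
    and "graph_connected A"
    and "(\<forall>k j. k \<noteq> j \<and> A $ k $ j \<noteq> 0 \<longrightarrow> A $ k $ j > 0) \<or>
         (\<forall>k j. k \<noteq> j \<and> A $ k $ j \<noteq> 0 \<longrightarrow> A $ k $ j < 0)"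
    and "zero_forcing_set (graph_edge A) S"
  shows "lie_generated ({A} \<union> diag_unit ` S) = UNIV"
proof -
  define L where "L = lie_generated ({A} \<union> diag_unit ` S)"
  have L: "lie_closed L" unfolding L_def by (rule lie_generated_closed)
  note sL = lcD(1)[OF L]
  have AL: "A \<in> L" using lie_generated_sub unfolding L_def by blast
  have SL: "E j j \<in> L" if "j \<in> S" for j
  proof -
    have "diag_unit j \<in> {A} \<union> diag_unit ` S" using that by simp
    then have "diag_unit j \<in> L" using lie_generated_sub[of "{A} \<union> diag_unit ` S"]
      unfolding L_def by (rule subsetD[rotated])
    then show ?thesis by (simp add: diag_unit_E)
  qed
  have zf: "E v v \<in> L" if "v \<in> zf_closure (graph_edge A) S" for v
    using that
  proof (induction rule: zf_closure.induct)
    case (init v) then show ?case by (rule SL)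
  next
    case (force v w)
    have vw: "v \<noteq> w" "A$v$w \<noteq> 0" using force.hyps(2) by (auto simp: graph_edge_def)
    have "E v w - E w v \<in> L"
      by (rule force_step[OF L assms(1) AL force.IH(1) vw]) (use force.IH(2) in \<open>auto simp: graph_edge_def\<close>)
    then show ?case using ww_step[OF L force.IH(1) _ vw(1)] by blast
  qed
  have diag: "E v v \<in> L" for v
    using zf assms(4) unfolding zero_forcing_set_def by blast
  have edge: "E v w \<in> L" if "graph_edge A v w" for v w
  proof -
    have vw: "v \<noteq> w" "A$v$w \<noteq> 0" using that by (auto simp: graph_edge_def)
    have "E v w - E w v \<in> L"
      by (rule force_step[OF L assms(1) AL diag vw]) (rule diag)
    then show ?thesis using ww_step[OF L diag _ vw(1)] by blast
  qed
  have reach: "E u w \<in> L" if "(u, w) \<in> {(k, l). graph_edge A k l}\<^sup>*" for u w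
    using that
  proof (induction rule: rtrancl_induct)
    case base then show ?case by (rule diag)
  next
    case (step y z)
    show ?case
    proof (cases "u = z")
      case True then show ?thesis using diag by simp
    next
      case False
      have "lie_bracket (E u y) (E y z) = E u z"
        using False by (simp add: lie_bracket_def E_mult)
      moreover have "lie_bracket (E u y) (E y z) \<in> L"
        using lcD(2)[OF L step.IH edge] step.hyps(2) by auto
      ultimately show ?thesis by simp
    qed
  qed
  have all: "E u w \<in> L" for u w
    using reach assms(2) unfolding graph_connected_def by blast
  have "M \<in> L" for M
  proof -
    have "(\<Sum>i\<in>UNIV. \<Sum>j\<in>UNIV. M$i$j *\<^sub>R E i j) \<in> L"
      by (intro subspace_sum[OF sL] subspace_scale[OF sL] all)
    then show ?thesis using E_decomp[of M, symmetric] by simp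
  qed
  then show ?thesis unfolding L_def by blast
qed

end
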